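(* Let $r\in[2,+\infty)$ and $h_0>0$. Let $Z\in L^r_{\mathbb{R}^q}(\mathbb{P})$ with $\mathbb{E}Z=0$, $a\in\mathbb{R}^d$ and $A\in\mathcal{M}(d,q,\mathbb{R})$. Then for every $h\in(0,h_0)$, $$\mathbb{E}\big|a+\sqrt h\,AZ\big|^r\le|a|^r(1+c^{(1)}_rh)+c^{(2)}_{r,h_0}\,h\,\|A\|^r\,\mathbb{E}|Z|^r,$$ where $c^{(1)}_r=2^{(r-3)_+}\frac{(r-1)(r-2)}{2}$, $c^{(2)}_{r,h_0}=2^{(r-3)_+}(r-1)\big(1+\frac r2h_0^{\frac r2-1}\big)$ and $\|A\|$ is the operator norm of $A$.
   Context: $|\cdot|$ denotes the Euclidean norm and $(x)_+=\max(x,0)$. *)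

theory Defs
  imports "HOL-Probability.Probability"
begin

definition pos_part :: "real \<Rightarrow> real" where
  "pos_part x = max x 0"

definition c1 :: "real \<Rightarrow> real" where
  "c1 r = 2 powr pos_part (r - 3) * ((r - 1) * (r - 2) / 2)"

definition c2 :: "real \<Rightarrow> real \<Rightarrow> real" where
  "c2 r h0 = 2 powr pos_part (r - 3) * (r - 1) * (1 + r / 2 * h0 powr (r / 2 - 1))"

end

theory Submission imports Defs begin

lemma young_r:
  fixes X Y r :: real
  assumes "X \<ge> 0" "Y \<ge> 0" "r \<ge> 2"
  shows "X powr (r-2) * Y^2 \<le> (r-2)/r * X powr r + 2/r * Y powr r"
proof (cases "r = 2")
  case True
  have "X powr 0 \<le> 1" by simp
  then have "X powr 0 * Y^2 \<le> Y^2" using assms by (simp add: mult_left_le_one_le)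
  then show ?thesis using True assms by (simp add: powr_numeral)
next
  case False
  hence r: "r > 2" using assms by simp
  have "X powr (r-2) * Y^2 \<le> (X powr (r-2)) powr (r/(r-2)) / (r/(r-2)) + (Y^2) powr (r/2) / (r/2)"
    apply (rule Youngs_inequality) using r assms by (auto simp: field_simps)
  also have "(X powr (r-2)) powr (r/(r-2)) = X powr r" using r by (simp add: powr_powr)
  also have "(Y^2) powr (r/2) = (Y powr 2) powr (r/2)" using assms by (simp add: powr_numeral)
  also have "\<dots> = Y powr r" by (simp add: powr_powr)
  finally show ?thesis by (simp add: field_simps)
qed

lemma powr_sum_le:
  fixes x y s :: real
  assumes "x \<ge> 0" "y \<ge> 0" "s \<ge> 0"
  shows "(x+y) powr s \<le> 2 powr pos_part (s-1) * (x powr s + y powr s)"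
proof (cases "s \<ge> 1")
  case True
  show ?thesis
  proof (cases "x = 0 \<or> y = 0")
    case True
    have "1 \<le> 2 powr pos_part (s-1)" unfolding pos_part_def by (rule ge_one_powr_ge_zero) auto
    hence "x powr s + y powr s \<le> 2 powr pos_part (s-1) * (x powr s + y powr s)"
      using mult_right_mono[of 1 "2 powr pos_part (s-1)" "x powr s + y powr s"] by simp
    then show ?thesis using True by auto
  next
    case False
    hence xy: "x > 0" "y > 0" using assms by auto
    have "((1/2)*x + (1/2)*y) powr s \<le> (1/2) * x powr s + (1/2) * y powr s"
      using convex_onD[OF powr_convex[OF True], of "1/2" x y] xy by auto
    hence "((x+y)/2) powr s \<le> (x powr s + y powr s)/2" by (simp add: field_simps)
    hence "(x+y) powr s / 2 powr s \<le> (x powr s + y powr s)/2" using xy by (simp add: powr_divide)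
    hence "(x+y) powr s \<le> 2 powr s / 2 * (x powr s + y powr s)" by (simp add: field_simps)
    also have "2 powr s / 2 = 2 powr pos_part (s-1)" using True
      by (simp add: pos_part_def powr_diff)
    finally show ?thesis .
  qed
next
  case False
  hence pp: "pos_part (s-1) = 0" by (simp add: pos_part_def)
  show ?thesis
  proof (cases "x = 0 \<or> y = 0")
    case True
    then show ?thesis using pp assms by auto
  next
    case False
    hence xy: "x > 0" "y > 0" using assms by auto
    have e: "s - 1 \<le> 0" using False \<open>\<not> s \<ge> 1\<close> by simp
    have "(x+y) powr s = (x+y) * (x+y) powr (s-1)"
      using xy by (simp add: powr_diff)
    also have "\<dots> = x * (x+y) powr (s-1) + y * (x+y) powr (s-1)"
      by (simp add: distrib_right)
    also have "\<dots> \<le> x * x powr (s-1) + y * y powr (s-1)"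
      using xy e by (intro add_mono mult_left_mono powr_mono2') auto
    also have "\<dots> = x powr s + y powr s" using xy by (simp add: powr_diff field_simps)
    finally show ?thesis using pp by simp
  qed
qed


lemma taylor_smooth:
  fixes al be ga p :: real
  assumes al: "al > 0" and ga: "ga \<ge> 0" and cs: "be^2 \<le> al*ga" and p: "p \<ge> 1"
    and pos: "\<And>t. 0 \<le> t \<Longrightarrow> t \<le> 1 \<Longrightarrow> al + 2*be*t + ga*t^2 > 0"
  shows "(al+2*be+ga) powr p \<le> al powr p + 2*p*al powr (p-1)*be
     + p*(2*p-1) * (2 powr pos_part (2*p-3) * (al powr (p-1) + ga powr (p-1))) * ga"
proof -
  define Q where "Q t = al + 2*be*t + ga*t^2" for t
  define Q' where "Q' t = 2*be + 2*ga*t" for t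
  define G1 where "G1 t = p * Q t powr (p-1) * Q' t" for t
  define G2 where "G2 t = p * ((p-1) * Q t powr (p-2) * Q' t * Q' t + Q t powr (p-1) * (2*ga))" for t
  define diff where "diff m = (if m = 0 then (\<lambda>t. Q t powr p) else if m = 1 then G1 else G2)" for m :: nat
  have dQ: "DERIV Q t :> Q' t" for t
    unfolding Q_def Q'_def by (auto intro!: derivative_eq_intros)
  have dQ': "DERIV Q' t :> 2*ga" for t
    unfolding Q'_def by (auto intro!: derivative_eq_intros)
  have d0: "DERIV (\<lambda>t. Q t powr p) t :> G1 t" if "0 \<le> t" "t \<le> 1" for t
    using DERIV_fun_powr[OF dQ, of t p] pos[OF that] unfolding G1_def Q_def by simp
  have d1: "DERIV G1 t :> G2 t" if "0 \<le> t" "t \<le> 1" for t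
  proof -
    have a: "DERIV (\<lambda>t. Q t powr (p-1)) t :> (p-1) * Q t powr (p-2) * Q' t"
      using DERIV_fun_powr[OF dQ, of t "p-1"] pos[OF that] unfolding Q_def by (simp add: algebra_simps)
    have "DERIV (\<lambda>t. p * (Q t powr (p-1) * Q' t)) t :> p * ((p-1) * Q t powr (p-2) * Q' t * Q' t + Q t powr (p-1) * (2*ga))"
      by (intro DERIV_cmult DERIV_mult[OF a dQ', THEN DERIV_cong]) (simp add: algebra_simps)
    then show ?thesis unfolding G1_def G2_def by (simp add: mult.assoc)
  qed
  obtain t where t: "0 < t" "t < 1" and eq:
    "Q 1 powr p = (\<Sum>m<2. diff m 0 / fact m * 1 ^ m) + diff 2 t / fact 2 * 1 ^ 2"
  proof -
    have "\<forall>m t. m < 2 \<and> 0 \<le> t \<and> t \<le> 1 \<longrightarrow> DERIV (diff m) t :> diff (Suc m) t"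
    proof (intro allI impI)
      fix m :: nat and t :: real assume h: "m < 2 \<and> 0 \<le> t \<and> t \<le> 1"
      then have "m = 0 \<or> m = 1" by auto
      then show "DERIV (diff m) t :> diff (Suc m) t"
        using d0 d1 h unfolding diff_def by auto
    qed
    then show ?thesis using Maclaurin[of 1 2 diff "\<lambda>t. Q t powr p"] that
      unfolding diff_def by auto
  qed
  have eq2: "Q 1 powr p = al powr p + G1 0 + G2 t / 2"
    using eq by (simp add: diff_def numeral_2_eq_2 Q_def)
  have Qt: "Q t > 0" using pos[of t] t unfolding Q_def by auto
  have key: "(be + ga*t)^2 \<le> ga * Q t"
  proof -
    have "ga * Q t - (be + ga*t)^2 = al*ga - be^2" unfolding Q_def by (simp add: algebra_simps power2_eq_square)
    then show ?thesis using cs by linarith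
  qed
  have "Q t powr (p-2) * Q' t * Q' t = 4 * (Q t powr (p-2) * (be+ga*t)^2)"
    unfolding Q'_def by (simp add: algebra_simps power2_eq_square)
  also have "\<dots> \<le> 4 * (Q t powr (p-2) * (ga * Q t))"
    using key by (intro mult_left_mono) auto
  also have "\<dots> = 4 * ga * Q t powr (p-1)"
    using Qt by (simp add: powr_diff field_simps power2_eq_square)
  finally have b1: "Q t powr (p-2) * Q' t * Q' t \<le> 4 * ga * Q t powr (p-1)" .
  have "G2 t \<le> p * ((p-1) * (4 * ga * Q t powr (p-1)) + Q t powr (p-1) * (2*ga))"
  proof -
    have "(p-1) * (Q t powr (p-2) * Q' t * Q' t) \<le> (p-1) * (4 * ga * Q t powr (p-1))"
      using b1 p by (intro mult_left_mono) auto
    then show ?thesis unfolding G2_def using p by (intro mult_left_mono add_right_mono) (auto simp: mult.assoc)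
  qed
  also have "\<dots> = 2*p*(2*p-1) * ga * Q t powr (p-1)" by (simp add: algebra_simps)
  finally have b2: "G2 t \<le> 2*p*(2*p-1) * ga * Q t powr (p-1)" .
  have sq: "be \<le> sqrt al * sqrt ga"
  proof -
    have "be \<le> \<bar>be\<bar>" by simp
    also have "\<bar>be\<bar> = sqrt (be^2)" by simp
    also have "\<dots> \<le> sqrt (al*ga)" using cs by (rule real_sqrt_le_mono)
    finally show ?thesis by (simp add: real_sqrt_mult)
  qed
  have "Q t \<le> (sqrt al + t * sqrt ga)^2"
  proof -
    have "(sqrt al + t * sqrt ga)^2 = al + 2*(sqrt al * sqrt ga)*t + ga*t^2"
      using al ga by (simp add: power2_eq_square algebra_simps)
    then show ?thesis unfolding Q_def using sq t by (smt (verit) mult_right_mono)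
  qed
  also have "\<dots> \<le> (sqrt al + sqrt ga)^2"
    using t ga al by (intro power_mono add_left_mono) (auto intro: mult_left_le_one_le)
  finally have Qb: "Q t \<le> (sqrt al + sqrt ga)^2" .
  have "Q t powr (p-1) \<le> ((sqrt al + sqrt ga)^2) powr (p-1)"
    using Qb Qt p by (intro powr_mono2) auto
  also have "\<dots> = ((sqrt al + sqrt ga) powr 2) powr (p-1)"
    using al ga by (simp add: powr_numeral)
  also have "\<dots> = (sqrt al + sqrt ga) powr (2*p-2)"
    by (simp add: powr_powr algebra_simps)
  also have "\<dots> \<le> 2 powr pos_part (2*p-2-1) * (sqrt al powr (2*p-2) + sqrt ga powr (2*p-2))"
    using p ga al by (intro powr_sum_le) auto
  also have "sqrt al powr (2*p-2) = al powr (p-1)"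
    using al by (simp add: powr_half_sqrt[symmetric] powr_powr algebra_simps)
  also have "sqrt ga powr (2*p-2) = ga powr (p-1)"
    using ga by (cases "ga = 0") (simp_all add: powr_half_sqrt[symmetric] powr_powr algebra_simps)
  finally have b3: "Q t powr (p-1) \<le> 2 powr pos_part (2*p-3) * (al powr (p-1) + ga powr (p-1))"
    by (simp add: algebra_simps)
  have "G2 t / 2 \<le> p*(2*p-1) * ga * Q t powr (p-1)" using b2 by simp
  also have "\<dots> \<le> p*(2*p-1) * ga * (2 powr pos_part (2*p-3) * (al powr (p-1) + ga powr (p-1)))"
    using b3 p ga by (intro mult_left_mono) auto
  finally have b4: "G2 t / 2 \<le> p*(2*p-1) * (2 powr pos_part (2*p-3) * (al powr (p-1) + ga powr (p-1))) * ga"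
    by (simp add: algebra_simps)
  have "G1 0 = 2*p*al powr (p-1)*be" unfolding G1_def Q_def Q'_def by simp
  moreover have "(al+2*be+ga) powr p = Q 1 powr p" unfolding Q_def by simp
  ultimately show ?thesis using eq2 b4 by linarith
qed


lemma Q_nonneg:
  fixes al be ga t :: real
  assumes "al > 0" "be^2 \<le> al*ga"
  shows "al + 2*be*t + ga*t^2 \<ge> 0"
proof -
  have "al * (al + 2*be*t + ga*t^2) = (al + be*t)^2 + (al*ga - be^2)*t^2"
    by (simp add: algebra_simps power2_eq_square)
  also have "\<dots> \<ge> 0" using assms by (intro add_nonneg_nonneg) auto
  finally show ?thesis using assms(1) by (simp add: zero_le_mult_iff)
qed

lemma scalar_S:
  fixes al be ga p :: real
  assumes al: "al \<ge> 0" and ga: "ga \<ge> 0" and cs: "be^2 \<le> al*ga" and p: "p \<ge> 1"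
  shows "(al+2*be+ga) powr p \<le> al powr p + 2*p*al powr (p-1)*be
     + p*(2*p-1) * (2 powr pos_part (2*p-3) * (al powr (p-1) + ga powr (p-1))) * ga"
proof (cases "al = 0")
  case True
  then have be: "be = 0" using cs by simp
  show ?thesis
  proof (cases "ga = 0")
    case True then show ?thesis using \<open>al = 0\<close> be by simp
  next
    case False
    then have gp: "ga > 0" using ga by simp
    have c1: "1 \<le> p*(2*p-1) * 2 powr pos_part (2*p-3)"
    proof -
      have "1 \<le> 2 powr pos_part (2*p-3)" unfolding pos_part_def by (rule ge_one_powr_ge_zero) auto
      moreover have "1 \<le> p*(2*p-1)" using p mult_mono[of 1 p 1 "2*p-1"] by simp
      ultimately show ?thesis using mult_mono[of 1 "p*(2*p-1)" 1 "2 powr pos_part (2*p-3)"] by simp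
    qed
    have "ga powr (p-1) * ga = ga powr p" using gp by (simp add: powr_diff)
    have "p*(2*p-1) * (2 powr pos_part (2*p-3) * (0 + ga powr (p-1))) * ga
       = (p*(2*p-1) * 2 powr pos_part (2*p-3)) * (ga powr (p-1) * ga)" by (simp only: mult_ac add_0_left)
    also have "\<dots> = (p*(2*p-1) * 2 powr pos_part (2*p-3)) * ga powr p" using \<open>ga powr (p-1) * ga = ga powr p\<close> by (simp only:)
    also have "\<dots> \<ge> ga powr p" using c1 by (simp add: mult_le_cancel_right1)
    finally show ?thesis using True be by simp
  qed
next
  case False
  then have alp: "al > 0" using al by simp
  define R where "R e = (al+e) powr p + 2*p*(al+e) powr (p-1)*be
     + p*(2*p-1) * (2 powr pos_part (2*p-3) * ((al+e) powr (p-1) + ga powr (p-1))) * ga" for e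
  have bnd: "(al+2*be+ga) powr p \<le> R e" if e: "e > 0" for e
  proof -
    have Q1: "al + 2*be*1 + ga*1^2 \<ge> 0" by (rule Q_nonneg[OF alp cs])
    have "(al+2*be+ga) powr p \<le> ((al+e)+2*be+ga) powr p"
      using Q1 e p by (intro powr_mono2) auto
    also have "\<dots> \<le> R e" unfolding R_def
    proof (rule taylor_smooth)
      show "al + e > 0" using alp e by simp
      show "be^2 \<le> (al+e)*ga" using cs e ga by (smt (verit) mult_right_mono)
      show "0 < al + e + 2*be*t + ga*t^2" for t
        using Q_nonneg[OF alp cs, of t] e by simp
    qed (use ga p in auto)
    finally show ?thesis .
  qed
  have lim: "(R \<longlongrightarrow> R 0) (at_right 0)"
    unfolding R_def using alp by (intro tendsto_intros) auto
  have "(al+2*be+ga) powr p \<le> R 0"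
  proof (rule tendsto_lowerbound[OF lim])
    show "\<forall>\<^sub>F e in at_right 0. (al+2*be+ga) powr p \<le> R e"
      using eventually_at_right_less[of "0::real"] by (rule eventually_mono) (rule bnd)
  qed simp
  then show ?thesis unfolding R_def by simp
qed


lemma sq_powr:
  fixes X q :: real
  assumes "X \<ge> 0"
  shows "(X^2) powr q = X powr (2*q)"
proof (cases "X = 0")
  case True then show ?thesis by simp
next
  case False
  then have "X^2 = X powr 2" using assms by (simp add: powr_numeral)
  then show ?thesis by (simp add: powr_powr)
qed

lemma vec_key:
  fixes a u :: "'a::real_inner" and r :: real
  assumes r: "r \<ge> 2"
  shows "norm (a+u) powr r \<le> norm a powr r + r * norm a powr (r-2) * inner a u
    + (r/2)*(r-1)*2 powr pos_part (r-3) * (norm a powr (r-2) * (norm u)^2 + norm u powr r)"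
proof -
  define al where "al = (norm a)^2"
  define be where "be = inner a u"
  define ga where "ga = (norm u)^2"
  have cs: "be^2 \<le> al*ga" unfolding al_def be_def ga_def
    using Cauchy_Schwarz_ineq[of a u] by (simp add: power2_norm_eq_inner)
  have S: "(al+2*be+ga) powr (r/2) \<le> al powr (r/2) + 2*(r/2)*al powr (r/2-1)*be
     + (r/2)*(2*(r/2)-1) * (2 powr pos_part (2*(r/2)-3) * (al powr (r/2-1) + ga powr (r/2-1))) * ga"
    by (rule scalar_S) (use cs r in \<open>auto simp: al_def ga_def\<close>)
  have e1: "al+2*be+ga = (norm (a+u))^2" unfolding al_def be_def ga_def
    by (simp add: power2_norm_eq_inner inner_add_left inner_add_right inner_commute)
  have e2: "(X^2) powr (r/2-1) = X powr (r-2)" if "X \<ge> 0" for X :: real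
    using sq_powr[OF that, of "r/2-1"] by (simp add: algebra_simps)
  have e3: "(X^2) powr (r/2) = X powr r" if "X \<ge> 0" for X :: real
    using sq_powr[OF that, of "r/2"] by simp
  have e4: "norm u powr (r-2) * (norm u)^2 = norm u powr r"
  proof (cases "u = 0")
    case False
    then have "norm u powr (r-2) * (norm u)^2 = norm u powr (r-2) * norm u powr 2"
      by (simp add: powr_numeral)
    also have "\<dots> = norm u powr r" by (subst powr_add[symmetric]) simp
    finally show ?thesis .
  qed simp
  have "norm (a+u) powr r \<le> norm a powr r + r * norm a powr (r-2) * be
     + (r/2)*(r-1) * (2 powr pos_part (r-3) * (norm a powr (r-2) + norm u powr (r-2))) * (norm u)^2"
  proof -
    have r2: "2*(r/2) = r" by simp
    show ?thesis using S unfolding e1 unfolding al_def ga_def e2[OF norm_ge_zero] e3[OF norm_ge_zero] r2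
      by (simp only: mult.assoc)
  qed
  also have "(r/2)*(r-1) * (2 powr pos_part (r-3) * (norm a powr (r-2) + norm u powr (r-2))) * (norm u)^2
     = (r/2)*(r-1)*2 powr pos_part (r-3) * (norm a powr (r-2) * (norm u)^2 + norm u powr (r-2) * (norm u)^2)"
    by (simp only: distrib_left distrib_right mult.assoc mult.left_commute mult.commute)
  finally show ?thesis unfolding e4 be_def .
qed

lemma pointwise:
  fixes a v :: "'a::real_inner" and r h h0 :: real
  assumes r: "r \<ge> 2" and h: "0 < h" "h < h0"
  shows "norm (a + sqrt h *\<^sub>R v) powr r \<le> norm a powr r * (1 + c1 r * h)
     + r * norm a powr (r-2) * sqrt h * inner a v + c2 r h0 * h * norm v powr r"
proof -
  define K where "K = 2 powr pos_part (r-3)"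
  define C where "C = (r/2)*(r-1)*K"
  define H where "H = h0 powr (r/2-1)"
  have Kp: "K \<ge> 0" unfolding K_def by simp
  have Cp: "C \<ge> 0" unfolding C_def using Kp r by simp
  have Hp: "H \<ge> 0" unfolding H_def by simp
  let ?u = "sqrt h *\<^sub>R v"
  have base: "norm (a + ?u) powr r \<le> norm a powr r + r * norm a powr (r-2) * inner a ?u
    + C * (norm a powr (r-2) * (norm ?u)^2 + norm ?u powr r)"
    using vec_key[OF r, of a ?u] unfolding C_def K_def by simp
  have u2: "(norm ?u)^2 = h * (norm v)^2" using h by (simp add: power_mult_distrib)
  have "norm ?u powr r = (sqrt h) powr r * norm v powr r" using h by (simp add: powr_mult)
  also have "(sqrt h) powr r = h powr (r/2)" using h
    by (simp add: powr_half_sqrt[symmetric] powr_powr)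
  also have "h powr (r/2) = h * h powr (r/2-1)" using h by (simp add: powr_diff)
  finally have ur: "norm ?u powr r = h * h powr (r/2-1) * norm v powr r" .
  have hH: "h powr (r/2-1) \<le> H" unfolding H_def using h r by (intro powr_mono2) auto
  have ur2: "norm ?u powr r \<le> h * H * norm v powr r"
    unfolding ur using hH h by (intro mult_right_mono mult_left_mono) auto
  have Y: "norm a powr (r-2) * (norm v)^2 \<le> (r-2)/r * norm a powr r + 2/r * norm v powr r"
    by (rule young_r) (use r in auto)
  have "norm a powr (r-2) * (norm ?u)^2 + norm ?u powr r
     \<le> h * ((r-2)/r * norm a powr r + 2/r * norm v powr r) + h * H * norm v powr r"
  proof -
    have "norm a powr (r-2) * (norm ?u)^2 = h * (norm a powr (r-2) * (norm v)^2)"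
      unfolding u2 by simp
    also have "\<dots> \<le> h * ((r-2)/r * norm a powr r + 2/r * norm v powr r)"
      using Y h by (intro mult_left_mono) auto
    finally show ?thesis using ur2 by linarith
  qed
  then have T: "C * (norm a powr (r-2) * (norm ?u)^2 + norm ?u powr r)
     \<le> C * (h * ((r-2)/r * norm a powr r + 2/r * norm v powr r) + h * H * norm v powr r)"
    using Cp by (intro mult_left_mono) auto
  have E: "C * (h * ((r-2)/r * norm a powr r + 2/r * norm v powr r) + h * H * norm v powr r)
     = norm a powr r * (c1 r * h) + c2 r h0 * h * norm v powr r"
    unfolding C_def c1_def c2_def K_def H_def using r by (simp add: field_simps)
  have L: "inner a ?u = sqrt h * inner a v" by simp
  show ?thesis using base T E unfolding L by (simp add: algebra_simps)
qed


theorem lemma1: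
  fixes M :: "'s measure" and Z :: "'s \<Rightarrow> real^'q" and a :: "real^'d"
    and A :: "real^'q^'d" and r h0 h :: real
  assumes "prob_space M"
    and "r \<ge> 2" and "h0 > 0"
    and "Z \<in> borel_measurable M"
    and "integrable M (\<lambda>\<omega>. norm (Z \<omega>) powr r)"
    and "integral\<^sup>L M Z = 0"
    and "0 < h" and "h < h0"
  shows "(\<integral>\<omega>. norm (a + sqrt h *\<^sub>R (A *v Z \<omega>)) powr r \<partial>M)
         \<le> norm a powr r * (1 + c1 r * h)
           + c2 r h0 * h * onorm (\<lambda>x. A *v x) powr r * (\<integral>\<omega>. norm (Z \<omega>) powr r \<partial>M)"
proof -
  note P = assms(1)
  have r: "r \<ge> 2" and h: "0 < h" "h < h0" and Zm: "Z \<in> borel_measurable M"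
    and Zr: "integrable M (\<lambda>\<omega>. norm (Z \<omega>) powr r)" and Z0: "integral\<^sup>L M Z = 0"
    using assms by auto
  interpret prob_space M by (rule P)
  define N where "N = onorm (\<lambda>x. A *v x)"
  have bl: "bounded_linear (\<lambda>x. A *v x)" by simp
  have Np: "N \<ge> 0" unfolding N_def by (rule onorm_pos_le[OF bl])
  have c2p: "c2 r h0 \<ge> 0" unfolding c2_def using r by simp
  define T where "T x = inner a (A *v x)" for x
  have blT: "bounded_linear T" unfolding T_def
    by (rule bounded_linear_compose[OF bounded_linear_inner_right bl])
  have Zi: "integrable M Z"
  proof (rule Bochner_Integration.integrable_bound)
    show "integrable M (\<lambda>\<omega>. 1 + norm (Z \<omega>) powr r)" using Zr by auto
    show "Z \<in> borel_measurable M" by (rule Zm)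
    show "AE x in M. norm (Z x) \<le> norm (1 + norm (Z x) powr r)"
    proof (rule AE_I2)
      fix x
      have "norm (Z x) \<le> 1 + norm (Z x) powr r"
      proof (cases "norm (Z x) \<le> 1")
        case True then show ?thesis by (smt (verit) powr_ge_zero)
      next
        case False
        then have "norm (Z x) = norm (Z x) powr 1" by simp
        also have "\<dots> \<le> norm (Z x) powr r" using False r by (intro powr_mono) auto
        finally show ?thesis by simp
      qed
      then show "norm (Z x) \<le> norm (1 + norm (Z x) powr r)" by simp
    qed
  qed
  define k1 where "k1 = r * norm a powr (r-2) * sqrt h"
  define g where "g \<omega> = norm a powr r * (1 + c1 r * h) + k1 * T (Z \<omega>)
      + c2 r h0 * h * N powr r * norm (Z \<omega>) powr r" for \<omega>
  define f where "f \<omega> = norm (a + sqrt h *\<^sub>R (A *v Z \<omega>)) powr r" for \<omega>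
  have fg: "f \<omega> \<le> g \<omega>" for \<omega>
  proof -
    have 1: "f \<omega> \<le> norm a powr r * (1 + c1 r * h)
     + k1 * T (Z \<omega>) + c2 r h0 * h * norm (A *v Z \<omega>) powr r"
      unfolding f_def k1_def T_def by (rule pointwise[OF r h])
    have "norm (A *v Z \<omega>) powr r \<le> (N * norm (Z \<omega>)) powr r"
      unfolding N_def using r by (intro powr_mono2 onorm[OF bl]) auto
    also have "(N * norm (Z \<omega>)) powr r = N powr r * norm (Z \<omega>) powr r"
      using Np by (simp add: powr_mult)
    finally have 2: "norm (A *v Z \<omega>) powr r \<le> N powr r * norm (Z \<omega>) powr r" .
    have 3: "c2 r h0 * h * norm (A *v Z \<omega>) powr r \<le> c2 r h0 * h * (N powr r * norm (Z \<omega>) powr r)"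
      using c2p h 2 by (intro mult_left_mono) auto
    show ?thesis using 1 3 unfolding g_def by (simp add: mult.assoc)
  qed
  have Ti: "integrable M (\<lambda>\<omega>. T (Z \<omega>))" by (rule integrable_bounded_linear[OF blT Zi])
  have gi: "integrable M g" unfolding g_def using Ti Zr by auto
  have fm: "f \<in> borel_measurable M" unfolding f_def
  proof (rule borel_measurable_continuous_on[OF _ Zm])
    show "continuous_on UNIV (\<lambda>x. norm (a + sqrt h *\<^sub>R (A *v x)) powr r)"
      using r by (intro continuous_on_powr' continuous_intros linear_continuous_on bl) auto
  qed
  have fi: "integrable M f"
  proof (rule Bochner_Integration.integrable_bound[OF gi fm])
    show "AE x in M. norm (f x) \<le> norm (g x)"
      using fg by (intro AE_I2) (smt (verit) f_def powr_ge_zero real_norm_def)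
  qed
  have "integral\<^sup>L M f \<le> integral\<^sup>L M g" by (rule integral_mono[OF fi gi fg])
  also have "integral\<^sup>L M g = norm a powr r * (1 + c1 r * h) + k1 * integral\<^sup>L M (\<lambda>\<omega>. T (Z \<omega>))
      + c2 r h0 * h * N powr r * integral\<^sup>L M (\<lambda>\<omega>. norm (Z \<omega>) powr r)"
    unfolding g_def using Ti Zr by (simp add: prob_space)
  also have "integral\<^sup>L M (\<lambda>\<omega>. T (Z \<omega>)) = 0"
    using integral_bounded_linear[OF blT Zi] Z0 unfolding T_def by simp
  finally show ?thesis unfolding f_def N_def by simp
qed

end
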